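(* Let $V$ be a vector space of dimension $\ge n$ over a field, and let $g_1,\dots,g_n\in \mathrm{GL}(V)$ satisfy $\operatorname{rank}(g_i-1)\le 1$ for all $i$, with $g_1g_2\cdots g_n=\mu\cdot\mathrm{id}_V$ for a scalar $\mu$. Then either $\mu=1$ or $\det(g_i)=\mu$ for all $i$. *)

theory Defs
  imports "Jordan_Normal_Form.DL_Rank" "Jordan_Normal_Form.Determinant"
begin

definition mat_prod_upto :: "nat \<Rightarrow> nat \<Rightarrow> (nat \<Rightarrow> 'a::semiring_1 mat) \<Rightarrow> 'a mat" where
  "mat_prod_upto d n g = foldr (*) (map g [0..<n]) (1\<^sub>m d)"

end

theory Submission
  imports Defs
begin

lemma (in vec_space) two_dep:
  assumes c: "c \<in> carrier_vec n" and v: "v \<in> carrier_vec n" and c0: "c \<noteq> 0\<^sub>v n"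
    and ne: "c \<noteq> v" and dep: "lin_dep {c, v}"
  shows "\<exists>a. v = a \<cdot>\<^sub>v c"
proof -
  let ?B = "mat_of_cols n [c, v]"
  have sc: "set [c, v] \<subseteq> carrier_vec n" using c v by auto
  have cols: "cols ?B = [c, v]" using sc by simp
  have B: "?B \<in> carrier_mat n 2" by (metis mat_of_cols_carrier(1) length_Cons list.size(3) numeral_2_eq_2)
  obtain u where u: "u \<in> carrier_vec 2" "u \<noteq> 0\<^sub>v 2" "?B *\<^sub>v u = 0\<^sub>v n"
    using lin_depE[OF B] dep cols ne by auto
  have comp: "u $ 0 * c $ r + u $ 1 * v $ r = 0" if r: "r < n" for r
  proof -
    have "(?B *\<^sub>v u) $ r = 0" using u(3) r by simp
    moreover have "(?B *\<^sub>v u) $ r = row ?B r \<bullet> u" using r by simp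
    moreover have "row ?B r \<bullet> u = (\<Sum>k<2. ?B $$ (r,k) * u $ k)"
      using u(1) r unfolding scalar_prod_def by (simp add: lessThan_atLeast0)
    moreover have "(\<Sum>k<2. ?B $$ (r,k) * u $ k) = c $ r * u $ 0 + v $ r * u $ 1"
      using r by (simp add: numeral_2_eq_2 mat_of_cols_def)
    ultimately show ?thesis by (simp add: mult.commute)
  qed
  have u1: "u $ 1 \<noteq> 0"
  proof
    assume h: "u $ 1 = 0"
    have "u $ 0 \<noteq> 0"
    proof
      assume "u $ 0 = 0"
      then have "u = 0\<^sub>v 2" using h u(1)
        by (intro eq_vecI) (auto simp: less_2_cases_iff)
      then show False using u(2) by simp
    qed
    then have "c = 0\<^sub>v n" using comp h c by (intro eq_vecI) auto
    then show False using c0 by simp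
  qed
  have "v = (- u $ 0 / u $ 1) \<cdot>\<^sub>v c"
  proof (rule eq_vecI)
    fix r assume "r < dim_vec (- u $ 0 / u $ 1 \<cdot>\<^sub>v c)"
    then have r: "r < n" using c by simp
    have "v $ r = - u $ 0 * c $ r / u $ 1" using comp[OF r] u1
      by (simp add: field_simps) (metis add.commute add_eq_0_iff mult.commute)
    then show "v $ r = (- u $ 0 / u $ 1 \<cdot>\<^sub>v c) $ r" using r c by simp
  qed (use c v in simp)
  then show ?thesis by blast
qed

lemma (in vec_space) rank1_factor:
  assumes A: "A \<in> carrier_mat n n" and r: "rank A \<le> 1"
  shows "\<exists>c w. c \<in> carrier_vec n \<and> w \<in> carrier_vec n \<and>
     A = mat n n (\<lambda>(i,k). c $ i * w $ k)"
proof (cases "\<forall>k<n. col A k = 0\<^sub>v n")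
  case True
  have "A = mat n n (\<lambda>(i,k). (0\<^sub>v n) $ i * (0\<^sub>v n) $ k)"
  proof (rule eq_matI)
    fix i j assume "i < dim_row (mat n n (\<lambda>(i,k). (0\<^sub>v n) $ i * (0\<^sub>v n) $ k))"
      "j < dim_col (mat n n (\<lambda>(i,k). (0\<^sub>v n) $ i * (0\<^sub>v n) $ k))"
    then have ij: "i < n" "j < n" by auto
    have "col A j $ i = 0" using True ij by simp
    then show "A $$ (i,j) = mat n n (\<lambda>(i,k). (0\<^sub>v n) $ i * (0\<^sub>v n) $ k) $$ (i,j)"
      using ij A by simp
  qed (use A in auto)
  then show ?thesis by blast
next
  case False
  then obtain j0 where j0: "j0 < n" "col A j0 \<noteq> 0\<^sub>v n" by blast
  define c where "c = col A j0"
  have c: "c \<in> carrier_vec n" using A j0 unfolding c_def by simp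
  have cin: "c \<in> set (cols A)" using A j0 unfolding c_def cols_def by auto
  have mult: "\<exists>a. col A k = a \<cdot>\<^sub>v c" if k: "k < n" for k
  proof (cases "col A k = c")
    case True
    then show ?thesis using c by (intro exI[of _ 1]) simp
  next
    case ne: False
    have kin: "col A k \<in> set (cols A)" using A k unfolding cols_def by auto
    have "lin_dep {c, col A k}"
    proof (rule ccontr)
      assume "\<not> lin_dep {c, col A k}"
      then have "card {c, col A k} \<le> rank A"
        using rank_ge_card_indpt[OF A, of "{c, col A k}"] cin kin by auto
      then show False using ne r by simp
    qed
    then show ?thesis using two_dep[OF c _ _ _] A k j0 ne unfolding c_def by auto
  qed
  then obtain a where a: "\<And>k. k < n \<Longrightarrow> col A k = a k \<cdot>\<^sub>v c" by metis
  define w where "w = vec n a"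
  have "A = mat n n (\<lambda>(i,k). c $ i * w $ k)"
  proof (rule eq_matI)
    fix i j assume "i < dim_row (mat n n (\<lambda>(i,k). c $ i * w $ k))"
      "j < dim_col (mat n n (\<lambda>(i,k). c $ i * w $ k))"
    then have ij: "i < n" "j < n" by auto
    have "col A j $ i = a j * c $ i" using a[OF ij(2)] ij c by simp
    then show "A $$ (i,j) = mat n n (\<lambda>(i,k). c $ i * w $ k) $$ (i,j)"
      using ij A unfolding w_def by (simp add: mult.commute)
  qed (use A in auto)
  moreover have "w \<in> carrier_vec n" unfolding w_def by simp
  ultimately show ?thesis using c by blast
qed

lemma det_rank1_update:
  fixes c w :: "'a::field vec"
  assumes c: "c \<in> carrier_vec n" and w: "w \<in> carrier_vec n"
  shows "det (1\<^sub>m n + mat n n (\<lambda>(i,k). c $ i * w $ k)) = 1 + w \<bullet> c"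
proof -
  define C where "C = mat n 1 (\<lambda>(i,_). c $ i)"
  define W where "W = mat 1 n (\<lambda>(_,k). w $ k)"
  have C: "C \<in> carrier_mat n 1" and W: "W \<in> carrier_mat 1 n" unfolding C_def W_def by auto
  have CW: "C * W = mat n n (\<lambda>(i,k). c $ i * w $ k)"
  proof (rule eq_matI)
    fix i j assume "i < dim_row (mat n n (\<lambda>(i,k). c $ i * w $ k))" "j < dim_col (mat n n (\<lambda>(i,k). c $ i * w $ k))"
    then have ij: "i < n" "j < n" by auto
    show "(C * W) $$ (i,j) = mat n n (\<lambda>(i,k). c $ i * w $ k) $$ (i,j)"
      using ij C W unfolding C_def W_def by (simp add: scalar_prod_def)
  qed (use C W in auto)
  have WC: "W * C = mat 1 1 (\<lambda>_. w \<bullet> c)"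
  proof (rule eq_matI)
    fix i j assume "i < dim_row (mat 1 1 (\<lambda>_. w \<bullet> c))" "j < dim_col (mat 1 1 (\<lambda>_. w \<bullet> c))"
    then have ij: "i = 0" "j = 0" by auto
    show "(W * C) $$ (i,j) = mat 1 1 (\<lambda>_. w \<bullet> c) $$ (i,j)"
      using ij C W c w unfolding C_def W_def by (simp add: scalar_prod_def)
  qed (use C W in auto)
  define M1 where "M1 = four_block_mat (1\<^sub>m 1 + W * C) (- W) (0\<^sub>m n 1) (1\<^sub>m n)"
  define M2 where "M2 = four_block_mat (1\<^sub>m 1) (0\<^sub>m 1 n) C (1\<^sub>m n)"
  define M4 where "M4 = four_block_mat (1\<^sub>m 1) (- W) (0\<^sub>m n 1) (1\<^sub>m n + C * W)"
  have M1: "M1 \<in> carrier_mat (1+n) (1+n)" unfolding M1_def using C W by auto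
  have M2: "M2 \<in> carrier_mat (1+n) (1+n)" unfolding M2_def using C W by auto
  have M4: "M4 \<in> carrier_mat (1+n) (1+n)" unfolding M4_def using C W by auto
  have e1: "M1 * M2 = four_block_mat (1\<^sub>m 1) (- W) C (1\<^sub>m n)"
    unfolding M1_def M2_def
    apply (subst mult_four_block_mat[of _ 1 1 _ n _ n])
    using C W apply (auto simp: uminus_mult_left_mat add_mult_distrib_mat)
    done
  have e2: "M2 * M4 = four_block_mat (1\<^sub>m 1) (- W) C (1\<^sub>m n)"
    unfolding M4_def M2_def
    apply (subst mult_four_block_mat[of _ 1 1 _ n _ n])
    using C W apply (auto simp: mult_add_distrib_mat)
    done
  have d1: "det M1 = det (1\<^sub>m 1 + W * C)"
    unfolding M1_def using C W by (subst det_four_block_mat_lower_left_zero[of _ 1 _ n]) auto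
  have d2: "det M2 = 1"
    unfolding M2_def using C W by (subst det_four_block_mat_upper_right_zero[of _ 1 _ n]) auto
  have d4: "det M4 = det (1\<^sub>m n + C * W)"
    unfolding M4_def using C W by (subst det_four_block_mat_lower_left_zero[of _ 1 _ n]) auto
  have "det (1\<^sub>m n + C * W) = det (1\<^sub>m 1 + W * C)"
    using det_mult[OF M1 M2] det_mult[OF M2 M4] e1 e2 d1 d2 d4 by simp
  also have "det (1\<^sub>m 1 + W * C) = 1 + w \<bullet> c"
  proof -
    have "(1\<^sub>m 1 + W * C :: 'a mat) \<in> carrier_mat 1 1" using C W by auto
    then have "det (1\<^sub>m 1 + W * C) = prod_list (diag_mat (1\<^sub>m 1 + W * C))"
      by (intro det_upper_triangular) (auto simp: upper_triangular_def)
    also have "\<dots> = 1 + w \<bullet> c" unfolding WC by (simp add: diag_mat_def)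
    finally show ?thesis .
  qed
  finally show ?thesis unfolding CW .
qed


lemma foldr_mult_vec:
  assumes "\<forall>j\<in>set xs. g j \<in> carrier_mat d d" "B \<in> carrier_mat d d" "v \<in> carrier_vec d"
  shows "foldr (*) (map g xs) B \<in> carrier_mat d d \<and>
         foldr (*) (map g xs) B *\<^sub>v v = foldr (\<lambda>j u. g j *\<^sub>v u) xs (B *\<^sub>v v)"
  using assms
proof (induction xs)
  case Nil then show ?case by simp
next
  case (Cons a xs)
  then have IH: "foldr (*) (map g xs) B \<in> carrier_mat d d"
    "foldr (*) (map g xs) B *\<^sub>v v = foldr (\<lambda>j u. g j *\<^sub>v u) xs (B *\<^sub>v v)"
    and ga: "g a \<in> carrier_mat d d" by auto
  have "foldr (*) (map g (a # xs)) B = g a * foldr (*) (map g xs) B" by simp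
  moreover have "g a * foldr (*) (map g xs) B \<in> carrier_mat d d" using IH ga by simp
  moreover have "(g a * foldr (*) (map g xs) B) *\<^sub>v v = g a *\<^sub>v (foldr (*) (map g xs) B *\<^sub>v v)"
    using IH(1) ga Cons.prems(3) by (rule_tac assoc_mult_mat_vec) auto
  ultimately show ?case using IH(2) by simp
qed

lemma foldr_vec_carrier:
  assumes "\<forall>j\<in>set xs. g j \<in> carrier_mat d d" "v \<in> carrier_vec d"
  shows "foldr (\<lambda>j u. g j *\<^sub>v u) xs v \<in> carrier_vec d"
  using assms by (induction xs) (auto intro: mult_mat_vec_carrier)

lemma foldr_fix:
  assumes "\<forall>j\<in>set xs. g j *\<^sub>v x = x"
  shows "foldr (\<lambda>j u. g j *\<^sub>v u) xs x = x"
  using assms by (induction xs) auto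

lemma inv_inj:
  fixes A :: "'a::field mat"
  assumes A: "A \<in> carrier_mat d d" and inv: "invertible_mat A"
    and y: "y \<in> carrier_vec d" and z: "z \<in> carrier_vec d" and eq: "A *\<^sub>v y = A *\<^sub>v z"
  shows "y = z"
proof -
  obtain B where B1: "A * B = 1\<^sub>m (dim_row A)" and B2: "B * A = 1\<^sub>m (dim_row B)"
    using inv unfolding invertible_mat_def inverts_mat_def by blast
  have "dim_row B = d" using B2 A by (metis carrier_matD(2) index_mult_mat(3) index_one_mat(3))
  moreover have "dim_col B = d" using B1 A by (metis carrier_matD(1) index_mult_mat(3) index_one_mat(3))
  ultimately have B: "B \<in> carrier_mat d d" by auto
  have BA: "B * A = 1\<^sub>m d" using B2 B by simp
  have "y = (B * A) *\<^sub>v y" using BA y by simp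
  also have "\<dots> = B *\<^sub>v (A *\<^sub>v z)" using B A y eq by simp
  also have "\<dots> = (B * A) *\<^sub>v z" using B A z by simp
  also have "\<dots> = z" using BA z by simp
  finally show ?thesis .
qed

lemma foldr_inj:
  fixes g :: "nat \<Rightarrow> 'a::field mat"
  assumes "\<forall>j\<in>set xs. g j \<in> carrier_mat d d \<and> invertible_mat (g j)"
    and "y \<in> carrier_vec d" "z \<in> carrier_vec d"
    and "foldr (\<lambda>j u. g j *\<^sub>v u) xs y = foldr (\<lambda>j u. g j *\<^sub>v u) xs z"
  shows "y = z"
  using assms
proof (induction xs)
  case Nil then show ?case by simp
next
  case (Cons a xs)
  have c: "\<forall>j\<in>set xs. g j \<in> carrier_mat d d" using Cons.prems(1) by auto
  have "foldr (\<lambda>j u. g j *\<^sub>v u) xs y = foldr (\<lambda>j u. g j *\<^sub>v u) xs z"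
    using inv_inj[of "g a" d] Cons.prems foldr_vec_carrier[OF c] by auto
  then show ?case using Cons by auto
qed

lemma outer_mult_vec:
  fixes c w x :: "'a::field vec"
  assumes c: "c \<in> carrier_vec d" and w: "w \<in> carrier_vec d" and x: "x \<in> carrier_vec d"
  shows "mat d d (\<lambda>(r,k). c $ r * w $ k) *\<^sub>v x = (w \<bullet> x) \<cdot>\<^sub>v c"
proof (rule eq_vecI)
  fix r assume "r < dim_vec ((w \<bullet> x) \<cdot>\<^sub>v c)"
  then have r: "r < d" using c by simp
  have "(mat d d (\<lambda>(r,k). c $ r * w $ k) *\<^sub>v x) $ r = (\<Sum>k<d. c $ r * w $ k * x $ k)"
    using r x unfolding mult_mat_vec_def scalar_prod_def by (simp add: lessThan_atLeast0)
  also have "\<dots> = c $ r * (\<Sum>k<d. w $ k * x $ k)" by (simp add: sum_distrib_left mult.assoc)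
  also have "\<dots> = ((w \<bullet> x) \<cdot>\<^sub>v c) $ r" using r c x w unfolding scalar_prod_def
    by (simp add: lessThan_atLeast0 ac_simps)
  finally show "(mat d d (\<lambda>(r,k). c $ r * w $ k) *\<^sub>v x) $ r = ((w \<bullet> x) \<cdot>\<^sub>v c) $ r" .
qed (use c in simp)

theorem mainTheorem2:
  fixes d n :: nat and g :: "nat \<Rightarrow> 'a::field mat" and \<mu> :: 'a
  assumes "d \<ge> n"
    and "\<And>i. i < n \<Longrightarrow> g i \<in> carrier_mat d d"
    and "\<And>i. i < n \<Longrightarrow> invertible_mat (g i)"
    and "\<And>i. i < n \<Longrightarrow> vec_space.rank d (g i - 1\<^sub>m d) \<le> 1"
    and "mat_prod_upto d n g = \<mu> \<cdot>\<^sub>m 1\<^sub>m d"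
  shows "\<mu> = 1 \<or> (\<forall>i < n. det (g i) = \<mu>)"
proof (cases "\<mu> = 1")
  case True then show ?thesis by simp
next
  case mu: False
  note dn = assms(1) and gc = assms(2) and ginv = assms(3) and grk = assms(4) and prod = assms(5)
  interpret vec_space "TYPE('a)" d .
  have "\<forall>j. \<exists>cw. j < n \<longrightarrow> (fst cw \<in> carrier_vec d \<and> snd cw \<in> carrier_vec d \<and>
     g j - 1\<^sub>m d = mat d d (\<lambda>(r,k). fst cw $ r * snd cw $ k))"
  proof
    fix j
    show "\<exists>cw. j < n \<longrightarrow> (fst cw \<in> carrier_vec d \<and> snd cw \<in> carrier_vec d \<and>
     g j - 1\<^sub>m d = mat d d (\<lambda>(r,k). fst cw $ r * snd cw $ k))"
    proof (cases "j < n")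
      case True
      have "g j - 1\<^sub>m d \<in> carrier_mat d d" by (rule minus_carrier_mat) simp
      from rank1_factor[OF this grk[OF True]] obtain c w where
        "c \<in> carrier_vec d \<and> w \<in> carrier_vec d \<and> g j - 1\<^sub>m d = mat d d (\<lambda>(r,k). c $ r * w $ k)"
        by blast
      then show ?thesis by (intro exI[of _ "(c,w)"]) simp
    qed simp
  qed
  from choice[OF this] obtain f where f0: "\<forall>j. j < n \<longrightarrow> (fst (f j) \<in> carrier_vec d \<and> snd (f j) \<in> carrier_vec d \<and>
     g j - 1\<^sub>m d = mat d d (\<lambda>(r,k). fst (f j) $ r * snd (f j) $ k))"
    by blast
  have f: "fst (f j) \<in> carrier_vec d \<and> snd (f j) \<in> carrier_vec d \<and>
     g j - 1\<^sub>m d = mat d d (\<lambda>(r,k). fst (f j) $ r * snd (f j) $ k)" if "j < n" for j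
    using f0 that by blast
  define c where "c j = fst (f j)" for j
  define w where "w j = snd (f j)" for j
  have cc: "c j \<in> carrier_vec d" and wc: "w j \<in> carrier_vec d"
    and gf: "g j - 1\<^sub>m d = mat d d (\<lambda>(r,k). c j $ r * w j $ k)" if "j < n" for j
    using f[OF that] unfolding c_def w_def by auto
  have "\<forall>i<n. det (g i) = \<mu>"
  proof (intro allI impI)
    fix i assume i: "i < n"
    define B where "B = mat d d (\<lambda>(r,k). if r < n \<and> r \<noteq> i then w r $ k else 0)"
    have Bc: "B \<in> carrier_mat d d" unfolding B_def by simp
    have "multrow i 0 B = B"
      unfolding B_def mat_multrow_def by (rule eq_matI) auto
    then have "det B = 0" using det_multrow[OF _ Bc, of i 0] i dn by simp
    then obtain x where x: "x \<in> carrier_vec d" "x \<noteq> 0\<^sub>v d" "B *\<^sub>v x = 0\<^sub>v d"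
      using det_0_iff_vec_prod_zero[OF Bc] by blast
    have wx: "w j \<bullet> x = 0" if "j < n" "j \<noteq> i" for j
    proof -
      have jd: "j < d" using that dn by simp
      have "row B j = w j" unfolding B_def using that jd wc[OF that(1)]
        by (intro eq_vecI) auto
      then have "(B *\<^sub>v x) $ j = w j \<bullet> x" using jd Bc by simp
      then show ?thesis using x(3) jd by simp
    qed
    have gx: "g j *\<^sub>v x = x" if "j < n" "j \<noteq> i" for j
    proof -
      have "(g j - 1\<^sub>m d) *\<^sub>v x = 0\<^sub>v d"
        using gf[OF that(1)] outer_mult_vec[OF cc[OF that(1)] wc[OF that(1)] x(1)] wx[OF that] cc[OF that(1)]
        by simp
      moreover have "(g j - 1\<^sub>m d) *\<^sub>v x = g j *\<^sub>v x - x"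
        using minus_mult_distrib_mat_vec[OF gc[OF that(1)] _ x(1)] x(1) by simp
      ultimately have "g j *\<^sub>v x - x = 0\<^sub>v d" by simp
      note eq = this
      show ?thesis
      proof (rule eq_vecI)
        fix r assume "r < dim_vec x"
        then have r: "r < d" using x(1) by simp
        have "(g j *\<^sub>v x - x) $ r = 0" using eq r by simp
        then show "(g j *\<^sub>v x) $ r = x $ r" using r x(1) gc[OF that(1)] by simp
      qed (use gc[OF that(1)] x(1) in simp)
    qed
    have gic: "g i \<in> carrier_mat d d" using gc[OF i] .
    have split: "[0..<n] = [0..<i] @ i # [Suc i..<n]" 
    proof -
      have "[0..<n] = [0..<i] @ [i..<n]" using upt_add_eq_append[of 0 i "n-i"] i by simp
      also have "[i..<n] = i # [Suc i..<n]" using i by (rule upt_conv_Cons)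
      finally show ?thesis .
    qed
    define R where "R = foldr (*) (map g [Suc i..<n]) (1\<^sub>m d)"
    have cR: "\<forall>j\<in>set [Suc i..<n]. g j \<in> carrier_mat d d" using gc by auto
    have cL: "\<forall>j\<in>set [0..<i]. g j \<in> carrier_mat d d" using gc i by auto
    have R: "R \<in> carrier_mat d d" "R *\<^sub>v x = foldr (\<lambda>j u. g j *\<^sub>v u) [Suc i..<n] (1\<^sub>m d *\<^sub>v x)"
      using foldr_mult_vec[OF cR _ x(1), of "1\<^sub>m d"] unfolding R_def by auto
    have Rx: "R *\<^sub>v x = x" unfolding R(2) using x(1) gx
      by (subst one_mult_mat_vec) (auto intro!: foldr_fix)
    have giR: "g i * R \<in> carrier_mat d d" using gic R(1) by simp
    have P: "mat_prod_upto d n g = foldr (*) (map g [0..<i]) (g i * R)"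
      unfolding mat_prod_upto_def split R_def by simp
    have "mat_prod_upto d n g *\<^sub>v x = foldr (\<lambda>j u. g j *\<^sub>v u) [0..<i] ((g i * R) *\<^sub>v x)"
      unfolding P using foldr_mult_vec[OF cL giR x(1)] by blast
    also have "(g i * R) *\<^sub>v x = g i *\<^sub>v x" using gic R(1) x(1) Rx by simp
    finally have e1: "mat_prod_upto d n g *\<^sub>v x = foldr (\<lambda>j u. g j *\<^sub>v u) [0..<i] (g i *\<^sub>v x)" .
    have "mat_prod_upto d n g *\<^sub>v x = \<mu> \<cdot>\<^sub>v x" unfolding prod

    proof (rule eq_vecI)
      fix r assume "r < dim_vec (\<mu> \<cdot>\<^sub>v x)"
      then have r: "r < d" using x(1) by simp
      have "((\<mu> \<cdot>\<^sub>m 1\<^sub>m d) *\<^sub>v x) $ r = (\<Sum>i = 0..<d. \<mu> * (if i = r then 1 else 0) * x $ i)"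
        using r x(1) unfolding mult_mat_vec_def scalar_prod_def by simp
      also have "\<dots> = (\<Sum>k\<in>{0..<d}. if k = r then \<mu> * x $ k else 0)"
        by (rule sum.cong) auto
      also have "\<dots> = \<mu> * x $ r" using r by simp
      finally show "((\<mu> \<cdot>\<^sub>m 1\<^sub>m d) *\<^sub>v x) $ r = (\<mu> \<cdot>\<^sub>v x) $ r" using r x(1) by simp
    qed (use x(1) in simp)
    also have "\<dots> = foldr (\<lambda>j u. g j *\<^sub>v u) [0..<i] (\<mu> \<cdot>\<^sub>v x)"
    proof (rule foldr_fix[symmetric], intro ballI)
      fix j assume "j \<in> set [0..<i]"
      then have j: "j < n" "j \<noteq> i" using i by auto
      show "g j *\<^sub>v (\<mu> \<cdot>\<^sub>v x) = \<mu> \<cdot>\<^sub>v x" using mult_mat_vec[OF gc[OF j(1)] x(1)] gx[OF j] by simp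
    qed
    finally have "foldr (\<lambda>j u. g j *\<^sub>v u) [0..<i] (g i *\<^sub>v x) = foldr (\<lambda>j u. g j *\<^sub>v u) [0..<i] (\<mu> \<cdot>\<^sub>v x)"
      using e1 by simp
    then have gix: "g i *\<^sub>v x = \<mu> \<cdot>\<^sub>v x"
      by (rule foldr_inj[rotated 3]) (use gc ginv i x(1) gic in \<open>auto intro: mult_mat_vec_carrier\<close>)
    define s where "s = w i \<bullet> x"
    have comp: "s * c i $ r = (\<mu> - 1) * x $ r" if r: "r < d" for r
    proof -
      have "(g i - 1\<^sub>m d) *\<^sub>v x = s \<cdot>\<^sub>v c i"
        using gf[OF i] outer_mult_vec[OF cc[OF i] wc[OF i] x(1)] unfolding s_def by simp
      moreover have "(g i - 1\<^sub>m d) *\<^sub>v x = g i *\<^sub>v x - x"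
        using minus_mult_distrib_mat_vec[OF gic _ x(1)] x(1) by simp
      ultimately have "s \<cdot>\<^sub>v c i = \<mu> \<cdot>\<^sub>v x - x" using gix by simp
      then have "(s \<cdot>\<^sub>v c i) $ r = (\<mu> \<cdot>\<^sub>v x - x) $ r" by simp
      then show ?thesis using r x(1) cc[OF i] by (simp add: algebra_simps)
    qed
    have s0: "s \<noteq> 0"
    proof
      assume "s = 0"
      then have "x = 0\<^sub>v d" using comp mu x(1) by (intro eq_vecI) auto
      then show False using x(2) by simp
    qed
    have ci: "c i $ r = (\<mu> - 1) / s * x $ r" if "r < d" for r
      using comp[OF that] s0 by (simp add: field_simps)
    have wc1: "w i \<bullet> c i = \<mu> - 1"
    proof -
      have "w i \<bullet> c i = (\<Sum>r<d. w i $ r * ((\<mu> - 1) / s * x $ r))"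
        using cc[OF i] wc[OF i] ci unfolding scalar_prod_def by (simp add: lessThan_atLeast0)
      also have "\<dots> = (\<mu> - 1) / s * (\<Sum>r<d. w i $ r * x $ r)"
        by (simp add: sum_distrib_left ac_simps)
      also have "(\<Sum>r<d. w i $ r * x $ r) = s"
        unfolding s_def scalar_prod_def using x(1) by (simp add: lessThan_atLeast0)
      finally show ?thesis using s0 by simp
    qed
    have "g i = 1\<^sub>m d + (g i - 1\<^sub>m d)" using gic by (intro eq_matI) auto
    then have "det (g i) = det (1\<^sub>m d + mat d d (\<lambda>(r,k). c i $ r * w i $ k))"
      using gf[OF i] by simp
    also have "\<dots> = 1 + w i \<bullet> c i" by (rule det_rank1_update[OF cc[OF i] wc[OF i]])
    finally show "det (g i) = \<mu>" using wc1 by simp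
  qed
  then show ?thesis by simp
qed

end
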